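(* Let $\Gamma$ be a connected signed graph on $N$ vertices. Then $\mathcal{M}(\Gamma(t))$ is a polynomial in $t$ of the form \[ \mathcal{M}(\Gamma(t))=\sum_{k=c(\Gamma_+)-1}^{N-c(\Gamma_-)} a_k(-t)^k,\qquad a_k=\sum_{T\in\mathcal{ST}_k(\Gamma)}|\pi(T)|, \] where all coefficients $a_k$ are non-negative, and the first and last coefficients $a_{c(\Gamma_+)-1}$ and $a_{N-c(\Gamma_-)}$ are strictly positive.
   Context: A signed graph $\Gamma$ is a finite simple undirected graph with vertex set $\{1,\dots,N\}$ in which every edge $\{i,j\}$ carries a nonzero real weight $\gamma_{ij}$, which may be of either sign. $\Gamma_+$ (resp. $\Gamma_-$) is the spanning subgraph on all vertices containing exactly the positively (resp. negatively) weighted edges; $c(H)$ is the number of connected components of a graph $H$. For real $t$, $\Gamma(t)$ is the weighted graph with the same edges as $\Gamma$ and weights $\gamma_{ij}(t)=\gamma_{ij}$ if $\gamma_{ij}>0$ and $\gamma_{ij}(t)=t\gamma_{ij}$ if $\gamma_{ij}<0$. For a tree $T$ with weighted edges, $\pi(T)=\prod_{\{i,j\}\in E(T)}\gamma_{ij}$ (product of weights of $\Gamma$). $\mathcal{ST}(\Gamma)$ is the set of spanning trees of $\Gamma$ and $\mathcal{ST}_k(\Gamma)$ the set of spanning trees having exactly $k$ edges in $\Gamma_-$. For a weighted graph $H$, $\mathcal{M}(H)=\sum_{T\in\mathcal{ST}(H)}\prod_{e\in E(T)}w_H(e)$, where $w_H$ denotes the weights of $H$; equivalently (Kirchhoff's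 weighted matrix tree theorem) $\mathcal{M}(H)=\frac{(-1)^{n-1}}{n}\prod_{i=2}^n\lambda_i$, where $n=|V(H)|$ and $\lambda_1=0,\lambda_2,\dots,\lambda_n$ are the eigenvalues of the Laplacian $\mathcal{L}(H)$ (off-diagonal entries the weights, diagonal entries minus the row sums of the weights). *)

theory Defs
  imports Main "HOL.Real"
begin

definition simple_graph :: "nat set \<Rightarrow> nat set set \<Rightarrow> bool" where
  "simple_graph V E \<longleftrightarrow> finite V \<and> E \<subseteq> {{u, v} | u v. u \<in> V \<and> v \<in> V \<and> u \<noteq> v}"

definition reach :: "nat set \<Rightarrow> nat set set \<Rightarrow> (nat \<times> nat) set" where
  "reach V F = {(u, v). u \<in> V \<and> v \<in> V \<and> {u, v} \<in> F}\<^sup>*"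

definition connected_graph :: "nat set \<Rightarrow> nat set set \<Rightarrow> bool" where
  "connected_graph V F \<longleftrightarrow> V \<noteq> {} \<and> (\<forall>u\<in>V. \<forall>v\<in>V. (u, v) \<in> reach V F)"

definition num_components :: "nat set \<Rightarrow> nat set set \<Rightarrow> nat" where
  "num_components V F = card (V // reach V F)"

text \<open>Spanning trees: edge subsets that are connected on all of V and acyclic
(no edge lies on a cycle, i.e. its endpoints are not joined after removing it).\<close>
definition spanning_trees :: "nat set \<Rightarrow> nat set set \<Rightarrow> nat set set set" where
  "spanning_trees V E = {T. T \<subseteq> E \<and> connected_graph V T \<and>
      (\<forall>e\<in>T. \<forall>u v. e = {u, v} \<longrightarrow> (u, v) \<notin> reach V (T - {e}))}"

definition pos_edges :: "nat set set \<Rightarrow> (nat set \<Rightarrow> real) \<Rightarrow> nat set set" where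
  "pos_edges E \<gamma> = {e \<in> E. \<gamma> e > 0}"

definition neg_edges :: "nat set set \<Rightarrow> (nat set \<Rightarrow> real) \<Rightarrow> nat set set" where
  "neg_edges E \<gamma> = {e \<in> E. \<gamma> e < 0}"

definition spanning_trees_k :: "nat set \<Rightarrow> nat set set \<Rightarrow> (nat set \<Rightarrow> real) \<Rightarrow> nat \<Rightarrow> nat set set set" where
  "spanning_trees_k V E \<gamma> k = {T \<in> spanning_trees V E. card (T \<inter> neg_edges E \<gamma>) = k}"

definition tree_weight :: "(nat set \<Rightarrow> real) \<Rightarrow> nat set set \<Rightarrow> real" where
  "tree_weight \<gamma> T = (\<Prod>e\<in>T. \<gamma> e)"

definition weight_t :: "(nat set \<Rightarrow> real) \<Rightarrow> real \<Rightarrow> nat set \<Rightarrow> real" where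
  "weight_t \<gamma> t e = (if \<gamma> e > 0 then \<gamma> e else t * \<gamma> e)"

definition tree_sum :: "nat set \<Rightarrow> nat set set \<Rightarrow> (nat set \<Rightarrow> real) \<Rightarrow> real" where
  "tree_sum V E w = (\<Sum>T\<in>spanning_trees V E. \<Prod>e\<in>T. w e)"

end

theory Submission
  imports Defs
begin

definition edges_ok :: "nat set \<Rightarrow> nat set set \<Rightarrow> bool" where
  "edges_ok V F \<longleftrightarrow> (\<forall>e\<in>F. \<exists>u v. u \<in> V \<and> v \<in> V \<and> e = {u, v})"

definition acyc :: "nat set \<Rightarrow> nat set set \<Rightarrow> bool" where
  "acyc V T \<longleftrightarrow> (\<forall>e\<in>T. \<forall>u v. e = {u, v} \<longrightarrow> (u, v) \<notin> reach V (T - {e}))"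

lemma base_sym: "sym {(u, v). u \<in> V \<and> v \<in> V \<and> {u, v} \<in> F}"
  by (auto simp: sym_def insert_commute)

lemma reach_equiv: "equiv UNIV (reach V F)"
  unfolding reach_def equiv_def
  using refl_rtrancl trans_rtrancl sym_rtrancl[OF base_sym[of V F]] by auto

lemma reach_sym: "(u, v) \<in> reach V F \<Longrightarrow> (v, u) \<in> reach V F"
  using reach_equiv[of V F] unfolding equiv_def by (meson symD)

lemma reach_trans: "(u, v) \<in> reach V F \<Longrightarrow> (v, w) \<in> reach V F \<Longrightarrow> (u, w) \<in> reach V F"
  unfolding reach_def by (meson rtrancl_trans)

lemma reach_refl[simp]: "(u, u) \<in> reach V F"
  unfolding reach_def by simp

lemma reach_edge: "u \<in> V \<Longrightarrow> v \<in> V \<Longrightarrow> {u, v} \<in> F \<Longrightarrow> (u, v) \<in> reach V F"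
  unfolding reach_def by (rule r_into_rtrancl) simp

lemma reach_mono: "F \<subseteq> G \<Longrightarrow> reach V F \<subseteq> reach V G"
  unfolding reach_def by (rule rtrancl_mono) auto

lemma reach_insert:
  assumes "a \<in> V" "b \<in> V"
  shows "reach V (insert {a, b} F) = reach V F \<union>
     {(x, y). ((x, a) \<in> reach V F \<and> (b, y) \<in> reach V F) \<or> ((x, b) \<in> reach V F \<and> (a, y) \<in> reach V F)}"
    (is "?L = ?R")
proof
  show "?L \<subseteq> ?R"
  proof
    fix p assume "p \<in> ?L"
    then obtain x y where p: "p = (x, y)" and xy: "(x, y) \<in> {(u, v). u \<in> V \<and> v \<in> V \<and> {u, v} \<in> insert {a, b} F}\<^sup>*"
      unfolding reach_def by (cases p) auto
    from xy have "(x, y) \<in> ?R"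
    proof (induction rule: rtrancl_induct)
      case base then show ?case by simp
    next
      case (step y z)
      from step(2) have yz: "y \<in> V" "z \<in> V" "{y, z} \<in> insert {a, b} F" by auto
      show ?case
      proof (cases "{y, z} \<in> F")
        case True
        then have "(y, z) \<in> reach V F" using yz reach_edge by blast
        then show ?thesis using step(3) reach_trans by blast
      next
        case False
        then have "{y, z} = {a, b}" using yz by auto
        then have "(y = a \<and> z = b) \<or> (y = b \<and> z = a)" by (auto simp: doubleton_eq_iff)
        then show ?thesis using step(3) reach_trans reach_refl by blast
      qed
    qed
    then show "p \<in> ?R" using p by simp
  qed
next
  have ab: "(a, b) \<in> ?L" using assms reach_edge by blast
  have ba: "(b, a) \<in> ?L" using reach_sym[OF ab] .
  have m: "reach V F \<subseteq> ?L" by (rule reach_mono) auto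
  show "?R \<subseteq> ?L"
  proof
    fix p assume "p \<in> ?R"
    then show "p \<in> ?L" using m ab ba reach_trans by blast
  qed
qed

lemma class_eq_iff: "reach V F `` {x} = reach V F `` {y} \<longleftrightarrow> (x, y) \<in> reach V F"
  using eq_equiv_class_iff[OF reach_equiv[of V F]] by simp

lemma reach_insert_same:
  assumes "a \<in> V" "b \<in> V" "(a, b) \<in> reach V F"
  shows "reach V (insert {a, b} F) = reach V F"
proof -
  have "{(x, y). ((x, a) \<in> reach V F \<and> (b, y) \<in> reach V F) \<or> ((x, b) \<in> reach V F \<and> (a, y) \<in> reach V F)} \<subseteq> reach V F"
  proof clarify
    fix x y
    assume h: "(x, a) \<in> reach V F \<and> (b, y) \<in> reach V F \<or> (x, b) \<in> reach V F \<and> (a, y) \<in> reach V F"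
    have ba: "(b, a) \<in> reach V F" using assms(3) by (rule reach_sym)
    from h show "(x, y) \<in> reach V F"
    proof
      assume "(x, a) \<in> reach V F \<and> (b, y) \<in> reach V F"
      then show ?thesis using assms(3) reach_trans by meson
    next
      assume "(x, b) \<in> reach V F \<and> (a, y) \<in> reach V F"
      then show ?thesis using ba reach_trans by meson
    qed
  qed
  then show ?thesis using reach_insert[OF assms(1,2), of F] by blast
qed

lemma finite_quot: "finite V \<Longrightarrow> finite (V // reach V F)"
  unfolding quotient_def by simp

lemma comp_join:
  assumes fin: "finite V" and ab: "a \<in> V" "b \<in> V" and nr: "(a, b) \<notin> reach V F"
  shows "num_components V (insert {a, b} F) + 1 = num_components V F"
proof -
  define R where "R = reach V F"
  define R' where "R' = reach V (insert {a, b} F)"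
  define A where "A = R `` {a}"
  define B where "B = R `` {b}"
  have R'eq: "R' = R \<union> {(x, y). ((x, a) \<in> R \<and> (b, y) \<in> R) \<or> ((x, b) \<in> R \<and> (a, y) \<in> R)}"
    unfolding R'_def R_def using reach_insert[OF ab] .
  have tr: "\<And>x y z. (x, y) \<in> R \<Longrightarrow> (y, z) \<in> R \<Longrightarrow> (x, z) \<in> R"
    unfolding R_def by (rule reach_trans)
  have sy: "\<And>x y. (x, y) \<in> R \<Longrightarrow> (y, x) \<in> R"
    unfolding R_def by (rule reach_sym)
  have rf: "\<And>x. (x, x) \<in> R" unfolding R_def by simp
  have nr': "(a, b) \<notin> R" using nr R_def by simp
  have cls: "R' `` {x} = (if (x, a) \<in> R \<or> (x, b) \<in> R then A \<union> B else R `` {x})" for x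
  proof (cases "(x, a) \<in> R \<or> (x, b) \<in> R")
    case True
    have "(x, y) \<in> R' \<longleftrightarrow> (a, y) \<in> R \<or> (b, y) \<in> R" for y
    proof (cases "(x, a) \<in> R")
      case xa: True
      then have "(x, b) \<notin> R" using tr sy nr' by blast
      moreover have "(x, y) \<in> R \<longleftrightarrow> (a, y) \<in> R" using xa tr sy by blast
      ultimately show ?thesis unfolding R'eq using xa by blast
    next
      case xa: False
      then have xb: "(x, b) \<in> R" using True by simp
      have "(x, y) \<in> R \<longleftrightarrow> (b, y) \<in> R" using xb tr sy by blast
      then show ?thesis unfolding R'eq using xa xb by blast
    qed
    then show ?thesis using True unfolding A_def B_def by auto
  next
    case False
    then show ?thesis unfolding R'eq by auto
  qed
  have ceq: "\<And>x y. R `` {x} = R `` {y} \<longleftrightarrow> (x, y) \<in> R"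
    unfolding R_def by (rule class_eq_iff)
  have AB: "A \<noteq> B" using ceq nr' A_def B_def by blast
  have Ain: "A \<in> V // R" "B \<in> V // R" using ab A_def B_def by (auto intro: quotientI)
  have qeq: "V // R' = insert (A \<union> B) (V // R - {A, B})"
  proof
    show "V // R' \<subseteq> insert (A \<union> B) (V // R - {A, B})"
    proof
      fix X assume "X \<in> V // R'"
      then obtain x where x: "x \<in> V" "X = R' `` {x}" by (auto elim: quotientE)
      show "X \<in> insert (A \<union> B) (V // R - {A, B})"
      proof (cases "(x, a) \<in> R \<or> (x, b) \<in> R")
        case True then show ?thesis using x cls by simp
      next
        case False
        then have "R `` {x} \<noteq> A" "R `` {x} \<noteq> B" using ceq A_def B_def by auto
        then show ?thesis using x cls False by (auto intro: quotientI)
      qed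
    qed
  next
    show "insert (A \<union> B) (V // R - {A, B}) \<subseteq> V // R'"
    proof
      fix X assume X: "X \<in> insert (A \<union> B) (V // R - {A, B})"
      show "X \<in> V // R'"
      proof (cases "X = A \<union> B")
        case True
        then have "X = R' `` {a}" using cls rf by simp
        then show ?thesis using ab by (auto intro: quotientI)
      next
        case False
        then have "X \<in> V // R" "X \<noteq> A" "X \<noteq> B" using X by auto
        then obtain x where x: "x \<in> V" "X = R `` {x}" by (auto elim: quotientE)
        then have "(x, a) \<notin> R" "(x, b) \<notin> R" using ceq A_def B_def \<open>X \<noteq> A\<close> \<open>X \<noteq> B\<close> by auto
        then have "X = R' `` {x}" using cls x by simp
        then show ?thesis using x by (auto intro: quotientI)
      qed
    qed
  qed
  have notin: "A \<union> B \<notin> V // R - {A, B}"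
  proof
    assume "A \<union> B \<in> V // R - {A, B}"
    then have "A \<union> B \<in> V // R" by simp
    then obtain x where x: "A \<union> B = R `` {x}" by (rule quotientE)
    have "a \<in> A" using rf A_def by simp
    then have "(x, a) \<in> R" using x by auto
    then have "R `` {x} = A" using ceq A_def by simp
    then have "b \<in> A" using x rf B_def by auto
    then show False using nr' A_def by simp
  qed
  have fq: "finite (V // R)" unfolding R_def using finite_quot[OF fin] .
  have "card (V // R') = card (V // R - {A, B}) + 1"
    using qeq notin fq by simp
  moreover have "card (V // R - {A, B}) + 2 = card (V // R)"
  proof -
    have "card {A, B} \<le> card (V // R)" using card_mono[OF fq, of "{A, B}"] Ain by simp
    then have "2 \<le> card (V // R)" using AB by simp
    then show ?thesis using Ain AB fq by (simp add: card_Diff_subset)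
  qed
  ultimately show ?thesis unfolding num_components_def R_def R'_def by simp
qed


lemma comp_insert_le:
  assumes "finite V" "a \<in> V" "b \<in> V"
  shows "num_components V (insert {a, b} F) \<le> num_components V F"
proof (cases "(a, b) \<in> reach V F")
  case True
  then show ?thesis using reach_insert_same[OF assms(2,3) True] unfolding num_components_def by simp
next
  case False
  then show ?thesis using comp_join[OF assms False] by simp
qed

lemma comp_empty: "num_components V {} = card V"
proof -
  have "reach V {} = Id" unfolding reach_def by simp
  moreover have "V // Id = (\<lambda>x. {x}) ` V" unfolding quotient_def by auto
  moreover have "card ((\<lambda>x. {x}) ` V) = card V" by (rule card_image) (auto simp: inj_on_def)
  ultimately show ?thesis unfolding num_components_def by simp
qed

lemma edges_ok_insert: "edges_ok V (insert e F) \<longleftrightarrow> (\<exists>u v. u \<in> V \<and> v \<in> V \<and> e = {u, v}) \<and> edges_ok V F"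
  unfolding edges_ok_def by auto

lemma edges_ok_mono: "edges_ok V G \<Longrightarrow> F \<subseteq> G \<Longrightarrow> edges_ok V F"
  unfolding edges_ok_def by auto

lemma edge_in_V: "edges_ok V F \<Longrightarrow> {u, v} \<in> F \<Longrightarrow> u \<in> V \<and> v \<in> V"
  unfolding edges_ok_def by (auto simp: doubleton_eq_iff)

lemma acyc_mono:
  assumes "acyc V G" "F \<subseteq> G" shows "acyc V F"
  unfolding acyc_def
proof (intro ballI allI impI)
  fix e u v assume e: "e \<in> F" "e = {u, v}"
  then have "(u, v) \<notin> reach V (G - {e})" using assms unfolding acyc_def by blast
  moreover have "reach V (F - {e}) \<subseteq> reach V (G - {e})" using assms(2) by (intro reach_mono) auto
  ultimately show "(u, v) \<notin> reach V (F - {e})" by blast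
qed

lemma acyc_insert:
  assumes ab: "a \<in> V" "b \<in> V" and nin: "{a, b} \<notin> F" and ok: "edges_ok V F"
  shows "acyc V (insert {a, b} F) \<longleftrightarrow> acyc V F \<and> (a, b) \<notin> reach V F"
proof
  assume h: "acyc V (insert {a, b} F)"
  have e: "insert {a, b} F - {{a, b}} = F" using nin by auto
  have 1: "(a, b) \<notin> reach V (insert {a, b} F - {{a, b}})" using h unfolding acyc_def by blast
  then have 1: "(a, b) \<notin> reach V F" unfolding e .
  have 2: "acyc V F" using acyc_mono[OF h] by blast
  show "acyc V F \<and> (a, b) \<notin> reach V F" using 1 2 by simp
next
  assume h: "acyc V F \<and> (a, b) \<notin> reach V F"
  show "acyc V (insert {a, b} F)"
    unfolding acyc_def
  proof (intro ballI allI impI)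
    fix e u v assume e: "e \<in> insert {a, b} F" and uv: "e = {u, v}"
    show "(u, v) \<notin> reach V (insert {a, b} F - {e})"
    proof (cases "e = {a, b}")
      case True
      have eq: "insert {a, b} F - {e} = F" using nin True by auto
      have "(u = a \<and> v = b) \<or> (u = b \<and> v = a)" using True uv by (auto simp: doubleton_eq_iff)
      then show ?thesis unfolding eq using h reach_sym by blast
    next
      case False
      then have eF: "e \<in> F" using e by simp
      then have uvV: "u \<in> V" "v \<in> V" using edge_in_V[OF ok] uv by auto
      have eq: "insert {a, b} F - {e} = insert {a, b} (F - {e})" using False by auto
      have nr: "(u, v) \<notin> reach V (F - {e})" using h eF uv unfolding acyc_def by blast
      have sub: "reach V (F - {e}) \<subseteq> reach V F" by (rule reach_mono) auto
      have uvr: "(u, v) \<in> reach V F" using reach_edge[OF uvV] eF uv by simp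
      show ?thesis
      proof
        assume "(u, v) \<in> reach V (insert {a, b} F - {e})"
        then have "(u, v) \<in> reach V (F - {e}) \<or>
           ((u, a) \<in> reach V (F - {e}) \<and> (b, v) \<in> reach V (F - {e})) \<or>
           ((u, b) \<in> reach V (F - {e}) \<and> (a, v) \<in> reach V (F - {e}))"
          unfolding eq reach_insert[OF ab] by blast
        then have "((u, a) \<in> reach V F \<and> (b, v) \<in> reach V F) \<or> ((u, b) \<in> reach V F \<and> (a, v) \<in> reach V F)"
          using nr sub by blast
        then have "(a, b) \<in> reach V F"
        proof
          assume "(u, a) \<in> reach V F \<and> (b, v) \<in> reach V F"
          then show ?thesis using uvr reach_sym reach_trans by meson
        next
          assume "(u, b) \<in> reach V F \<and> (a, v) \<in> reach V F"
          then show ?thesis using uvr reach_sym reach_trans by meson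
        qed
        then show False using h by simp
      qed
    qed
  qed
qed

lemma count_lemma:
  assumes "finite V" "finite F" "edges_ok V F"
  shows "card V \<le> num_components V F + card F \<and> (acyc V F \<longleftrightarrow> num_components V F + card F = card V)"
  using assms(2,3)
proof (induction F rule: finite_induct)
  case empty
  then show ?case by (simp add: comp_empty acyc_def)
next
  case (insert e F)
  then obtain a b where ab: "a \<in> V" "b \<in> V" "e = {a, b}" and ok: "edges_ok V F"
    by (auto simp: edges_ok_insert)
  note IH = insert.IH[OF ok]
  show ?case
  proof (cases "(a, b) \<in> reach V F")
    case True
    have "num_components V (insert e F) = num_components V F"
      using reach_insert_same[OF ab(1,2) True] ab unfolding num_components_def by simp
    moreover have "\<not> acyc V (insert e F)" using acyc_insert[OF ab(1,2) _ ok] insert.hyps ab True by simp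
    ultimately show ?thesis using IH insert.hyps by simp
  next
    case False
    have c0: "num_components V (insert e F) + 1 = num_components V F"
      using comp_join[OF assms(1) ab(1,2) False] ab by simp
    have ac: "acyc V (insert e F) \<longleftrightarrow> acyc V F" using acyc_insert[OF ab(1,2) _ ok] insert.hyps ab False by simp
    have c1: "card (insert e F) = card F + 1" using insert.hyps by simp
    have X: "num_components V (insert e F) + card (insert e F) = num_components V F + card F"
      using c0 c1 by simp
    show ?thesis unfolding X ac using IH .
  qed
qed

lemma comp_mono_aux:
  assumes "finite V" "finite D" "edges_ok V D"
  shows "num_components V (F \<union> D) \<le> num_components V F"
  using assms(2,3)
proof (induction D rule: finite_induct)
  case empty then show ?case by simp
next
  case (insert e D)
  then obtain a b where ab: "a \<in> V" "b \<in> V" "e = {a, b}" and ok: "edges_ok V D"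
    by (auto simp: edges_ok_insert)
  have "num_components V (F \<union> insert e D) = num_components V (insert {a, b} (F \<union> D))" using ab by simp
  also have "\<dots> \<le> num_components V (F \<union> D)" by (rule comp_insert_le[OF assms(1) ab(1,2)])
  finally show ?case using insert.IH[OF ok] by simp
qed

lemma comp_mono:
  assumes "finite V" "finite G" "edges_ok V G" "F \<subseteq> G"
  shows "num_components V G \<le> num_components V F"
proof -
  have "G = F \<union> (G - F)" using assms(4) by auto
  then show ?thesis using comp_mono_aux[OF assms(1), of "G - F" F] assms edges_ok_mono[OF assms(3)] by auto
qed


lemma extend_acyc:
  assumes fV: "finite V" and fG: "finite G" and ok: "edges_ok V G" and AG: "A \<subseteq> G" and acA: "acyc V A"
  shows "\<exists>B. A \<subseteq> B \<and> B \<subseteq> G \<and> acyc V B \<and> num_components V B = num_components V G"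
proof -
  define S where "S = {B. A \<subseteq> B \<and> B \<subseteq> G \<and> acyc V B}"
  have "S \<subseteq> Pow G" unfolding S_def by auto
  then have fS: "finite S" using fG finite_subset by blast
  have AS: "A \<in> S" unfolding S_def using AG acA by simp
  define m where "m = Max (card ` S)"
  have "m \<in> card ` S" unfolding m_def using fS AS by (intro Max_in) auto
  then obtain B where BS: "B \<in> S" and cB: "card B = m" by auto
  have mx: "\<And>B'. B' \<in> S \<Longrightarrow> card B' \<le> m" unfolding m_def using fS by (intro Max_ge) auto
  have BG: "B \<subseteq> G" and AB: "A \<subseteq> B" and acB: "acyc V B" using BS S_def by auto
  have okB: "edges_ok V B" using edges_ok_mono[OF ok BG] .
  have fB: "finite B" using finite_subset[OF BG fG] .
  have base: "{(u, v). u \<in> V \<and> v \<in> V \<and> {u, v} \<in> G} \<subseteq> reach V B"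
  proof clarify
    fix u v assume uv: "u \<in> V" "v \<in> V" "{u, v} \<in> G"
    show "(u, v) \<in> reach V B"
    proof (cases "{u, v} \<in> B")
      case True then show ?thesis using reach_edge uv by blast
    next
      case False
      show ?thesis
      proof (rule ccontr)
        assume nr: "(u, v) \<notin> reach V B"
        have "acyc V (insert {u, v} B)" using acyc_insert[OF uv(1,2) False okB] acB nr by simp
        then have "insert {u, v} B \<in> S" using S_def AB BG uv by auto
        then have "card (insert {u, v} B) \<le> m" by (rule mx)
        moreover have "card (insert {u, v} B) = card B + 1" using False fB by simp
        ultimately show False using cB by simp
      qed
    qed
  qed
  have "reach V G \<subseteq> reach V B"
    using base unfolding reach_def by (rule rtrancl_subset_rtrancl)
  moreover have "reach V B \<subseteq> reach V G" using BG by (rule reach_mono)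
  ultimately have "reach V B = reach V G" by blast
  then have "num_components V B = num_components V G" unfolding num_components_def by simp
  then show ?thesis using AB BG acB by blast
qed

lemma conn_iff:
  assumes "V \<noteq> {}"
  shows "connected_graph V F \<longleftrightarrow> num_components V F = 1"
proof
  assume c: "connected_graph V F"
  obtain v0 where v0: "v0 \<in> V" using assms by blast
  have "V // reach V F = {reach V F `` {v0}}"
  proof
    show "V // reach V F \<subseteq> {reach V F `` {v0}}"
    proof
      fix X assume "X \<in> V // reach V F"
      then obtain x where x: "x \<in> V" "X = reach V F `` {x}" by (rule quotientE) auto
      then have "(x, v0) \<in> reach V F" using c v0 unfolding connected_graph_def by blast
      then show "X \<in> {reach V F `` {v0}}" using x class_eq_iff by blast
    qed
  next
    show "{reach V F `` {v0}} \<subseteq> V // reach V F" using v0 by (auto intro: quotientI)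
  qed
  then show "num_components V F = 1" unfolding num_components_def by simp
next
  assume h: "num_components V F = 1"
  then obtain X where X: "V // reach V F = {X}" unfolding num_components_def by (rule card_1_singletonE)
  have "\<forall>u\<in>V. \<forall>v\<in>V. (u, v) \<in> reach V F"
  proof (intro ballI)
    fix u v assume "u \<in> V" "v \<in> V"
    then have "reach V F `` {u} \<in> V // reach V F" "reach V F `` {v} \<in> V // reach V F"
      by (auto intro: quotientI)
    then have "reach V F `` {u} = reach V F `` {v}" using X by simp
    then show "(u, v) \<in> reach V F" using class_eq_iff by blast
  qed
  then show "connected_graph V F" unfolding connected_graph_def using assms by simp
qed

lemma st_eq: "spanning_trees V E = {T. T \<subseteq> E \<and> connected_graph V T \<and> acyc V T}"
  unfolding spanning_trees_def acyc_def by simp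

lemma tree_facts:
  assumes fV: "finite V" and fE: "finite E" and ok: "edges_ok V E" and T: "T \<in> spanning_trees V E"
  shows "finite T" "edges_ok V T" "acyc V T" "num_components V T = 1" "1 + card T = card V"
proof -
  have TE: "T \<subseteq> E" and c: "connected_graph V T" and a: "acyc V T" using T st_eq by auto
  show fT: "finite T" using finite_subset[OF TE fE] .
  show okT: "edges_ok V T" using edges_ok_mono[OF ok TE] .
  show "acyc V T" using a .
  have "V \<noteq> {}" using c connected_graph_def by simp
  then show c1: "num_components V T = 1" using conn_iff c by simp
  show "1 + card T = card V" using count_lemma[OF fV fT okT] a c1 by simp
qed

lemma sub_count:
  assumes fV: "finite V" and fE: "finite E" and ok: "edges_ok V E" and T: "T \<in> spanning_trees V E"
    and PT: "P \<subseteq> T"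
  shows "num_components V P + card P = card V"
proof -
  have fP: "finite P" using finite_subset[OF PT tree_facts(1)[OF assms(1-4)]] .
  have okP: "edges_ok V P" using edges_ok_mono[OF tree_facts(2)[OF assms(1-4)] PT] .
  have "acyc V P" using acyc_mono[OF tree_facts(3)[OF assms(1-4)] PT] .
  then show ?thesis using count_lemma[OF fV fP okP] by simp
qed

lemma exist_tree:
  assumes fV: "finite V" and fE: "finite E" and ok: "edges_ok V E" and c: "connected_graph V E"
    and GE: "G \<subseteq> E"
  shows "\<exists>T\<in>spanning_trees V E. num_components V (T \<inter> G) = num_components V G"
proof -
  have fG: "finite G" using finite_subset[OF GE fE] .
  have okG: "edges_ok V G" using edges_ok_mono[OF ok GE] .
  have "acyc V {}" unfolding acyc_def by simp
  then obtain B0 where B0: "B0 \<subseteq> G" "acyc V B0" "num_components V B0 = num_components V G"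
    using extend_acyc[OF fV fG okG, of "{}"] by auto
  then obtain B where B: "B0 \<subseteq> B" "B \<subseteq> E" "acyc V B" "num_components V B = num_components V E"
    using extend_acyc[OF fV fE ok, of B0] GE by auto
  have Vne: "V \<noteq> {}" using c connected_graph_def by simp
  have "num_components V E = 1" using conn_iff[OF Vne] c by simp
  then have "connected_graph V B" using conn_iff[OF Vne] B by simp
  then have BT: "B \<in> spanning_trees V E" using st_eq B by simp
  have fBG: "finite (B \<inter> G)" using fG by simp
  have "num_components V G \<le> num_components V (B \<inter> G)" by (rule comp_mono[OF fV fG okG]) auto
  moreover have "num_components V (B \<inter> G) \<le> num_components V B0"
    by (rule comp_mono[OF fV fBG]) (use okG edges_ok_mono B0 B in auto)
  ultimately show ?thesis using B0 BT by (intro bexI[of _ B]) auto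
qed


lemma weight_split:
  assumes "e \<in> E" "\<gamma> e \<noteq> 0"
  shows "weight_t \<gamma> t e = (if e \<in> neg_edges E \<gamma> then - t else 1) * \<bar>\<gamma> e\<bar>"
  using assms unfolding weight_t_def neg_edges_def by auto

lemma tree_prod:
  assumes fT: "finite T" and TE: "T \<subseteq> E" and nz: "\<forall>e\<in>E. \<gamma> e \<noteq> 0"
  shows "(\<Prod>e\<in>T. weight_t \<gamma> t e) = (- t) ^ card (T \<inter> neg_edges E \<gamma>) * \<bar>tree_weight \<gamma> T\<bar>"
proof -
  have "(\<Prod>e\<in>T. weight_t \<gamma> t e) = (\<Prod>e\<in>T. (if e \<in> neg_edges E \<gamma> then - t else 1) * \<bar>\<gamma> e\<bar>)"
  proof (rule prod.cong[OF refl])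
    fix e assume "e \<in> T"
    then show "weight_t \<gamma> t e = (if e \<in> neg_edges E \<gamma> then - t else 1) * \<bar>\<gamma> e\<bar>"
      using weight_split[of e E \<gamma> t] TE nz by blast
  qed
  also have "\<dots> = (\<Prod>e\<in>T. (if e \<in> neg_edges E \<gamma> then - t else 1)) * (\<Prod>e\<in>T. \<bar>\<gamma> e\<bar>)"
    by (rule prod.distrib)
  also have "(\<Prod>e\<in>T. (if e \<in> neg_edges E \<gamma> then - t else 1)) = (- t) ^ card (T \<inter> neg_edges E \<gamma>)"
    using prod.If_cases[OF fT, of "\<lambda>e. e \<in> neg_edges E \<gamma>" "\<lambda>_. - t" "\<lambda>_. 1"] by simp
  also have "(\<Prod>e\<in>T. \<bar>\<gamma> e\<bar>) = \<bar>tree_weight \<gamma> T\<bar>" unfolding tree_weight_def by (simp add: abs_prod)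
  finally show ?thesis .
qed

theorem mainTheorem3:
  fixes N :: nat and E :: "nat set set" and \<gamma> :: "nat set \<Rightarrow> real"
  assumes "simple_graph {1..N} E"
    and "\<forall>e\<in>E. \<gamma> e \<noteq> 0"
    and "connected_graph {1..N} E"
  defines "a \<equiv> (\<lambda>k. \<Sum>T\<in>spanning_trees_k {1..N} E \<gamma> k. \<bar>tree_weight \<gamma> T\<bar>)"
  shows "(\<forall>t::real. tree_sum {1..N} E (weight_t \<gamma> t) =
            (\<Sum>k = num_components {1..N} (pos_edges E \<gamma>) - 1 .. N - num_components {1..N} (neg_edges E \<gamma>).
               a k * (- t) ^ k))
       \<and> (\<forall>k. a k \<ge> 0)
       \<and> a (num_components {1..N} (pos_edges E \<gamma>) - 1) > 0
       \<and> a (N - num_components {1..N} (neg_edges E \<gamma>)) > 0"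
proof -
  define V where "V = {1..N}"
  define Ps where "Ps = pos_edges E \<gamma>"
  define Ng where "Ng = neg_edges E \<gamma>"
  define cp where "cp = num_components V Ps"
  define cn where "cn = num_components V Ng"
  define ST where "ST = spanning_trees V E"
  have fV: "finite V" and cV: "card V = N" unfolding V_def by auto
  have sg: "E \<subseteq> {{u, v} | u v. u \<in> V \<and> v \<in> V \<and> u \<noteq> v}"
    using assms(1) unfolding simple_graph_def V_def by simp
  have ok: "edges_ok V E" unfolding edges_ok_def using sg by blast
  have "E \<subseteq> Pow V" using sg by blast
  then have fE: "finite E" using fV finite_subset by blast
  have conn: "connected_graph V E" using assms(3) V_def by simp
  have nz: "\<forall>e\<in>E. \<gamma> e \<noteq> 0" using assms(2) .
  have PsE: "Ps \<subseteq> E" and NgE: "Ng \<subseteq> E" unfolding Ps_def Ng_def pos_edges_def neg_edges_def by auto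
  have fPs: "finite Ps" using finite_subset[OF PsE fE] .
  have fNg: "finite Ng" using finite_subset[OF NgE fE] .
  have okPs: "edges_ok V Ps" using edges_ok_mono[OF ok PsE] .
  have okNg: "edges_ok V Ng" using edges_ok_mono[OF ok NgE] .
  have fST: "finite ST" unfolding ST_def
  proof -
    have "spanning_trees V E \<subseteq> Pow E" unfolding spanning_trees_def by auto
    then show "finite (spanning_trees V E)" using fE finite_subset by blast
  qed
  have split: "card (T \<inter> Ps) + card (T \<inter> Ng) + 1 = N"
    and cP: "num_components V (T \<inter> Ps) + card (T \<inter> Ps) = N"
    and cQ: "num_components V (T \<inter> Ng) + card (T \<inter> Ng) = N"
    if T: "T \<in> ST" for T
  proof -
    have TST: "T \<in> spanning_trees V E" using T ST_def by simp
    have TE: "T \<subseteq> E" using TST st_eq by auto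
    have fT: "finite T" using tree_facts(1)[OF fV fE ok TST] .
    have un: "T = (T \<inter> Ps) \<union> (T \<inter> Ng)" using TE nz unfolding Ps_def Ng_def pos_edges_def neg_edges_def
      by (auto simp: linorder_neq_iff)
    have dj: "(T \<inter> Ps) \<inter> (T \<inter> Ng) = {}" unfolding Ps_def Ng_def pos_edges_def neg_edges_def by auto
    have "card T = card (T \<inter> Ps) + card (T \<inter> Ng)"
      using card_Un_disjoint[of "T \<inter> Ps" "T \<inter> Ng"] fT dj un by simp
    then show "card (T \<inter> Ps) + card (T \<inter> Ng) + 1 = N" using tree_facts(5)[OF fV fE ok TST] cV by simp
    show "num_components V (T \<inter> Ps) + card (T \<inter> Ps) = N" using sub_count[OF fV fE ok TST] cV by simp
    show "num_components V (T \<inter> Ng) + card (T \<inter> Ng) = N" using sub_count[OF fV fE ok TST] cV by simp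
  qed
  have range: "cp - 1 \<le> card (T \<inter> Ng) \<and> card (T \<inter> Ng) \<le> N - cn" if T: "T \<in> ST" for T
  proof -
    have fT: "finite T" using tree_facts(1)[OF fV fE ok] T ST_def by simp
    have "cp \<le> num_components V (T \<inter> Ps)" unfolding cp_def by (rule comp_mono[OF fV fPs okPs]) auto
    moreover have "cn \<le> num_components V (T \<inter> Ng)" unfolding cn_def by (rule comp_mono[OF fV fNg okNg]) auto
    ultimately show ?thesis using split[OF T] cP[OF T] cQ[OF T] by arith
  qed
  obtain T1 where T1: "T1 \<in> ST" "num_components V (T1 \<inter> Ps) = cp"
    using exist_tree[OF fV fE ok conn PsE] unfolding ST_def cp_def by blast
  obtain T2 where T2: "T2 \<in> ST" "num_components V (T2 \<inter> Ng) = cn"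
    using exist_tree[OF fV fE ok conn NgE] unfolding ST_def cn_def by blast
  have k1: "card (T1 \<inter> Ng) = cp - 1" using split[OF T1(1)] cP[OF T1(1)] T1(2) by arith
  have k2: "card (T2 \<inter> Ng) = N - cn" using cQ[OF T2(1)] T2(2) by arith
  have STk: "spanning_trees_k V E \<gamma> k = {T. T \<in> ST \<and> card (T \<inter> Ng) = k}" for k
    unfolding spanning_trees_k_def ST_def Ng_def by simp
  have aeq: "a k = (\<Sum>T\<in>{T. T \<in> ST \<and> card (T \<inter> Ng) = k}. \<bar>tree_weight \<gamma> T\<bar>)" for k
    unfolding a_def using STk[of k] V_def by simp
  have twpos: "\<bar>tree_weight \<gamma> T\<bar> > 0" if "T \<in> ST" for T
  proof -
    have TE: "T \<subseteq> E" using that st_eq ST_def by auto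
    have fT: "finite T" using tree_facts(1)[OF fV fE ok] that ST_def by simp
    have "tree_weight \<gamma> T \<noteq> 0" unfolding tree_weight_def using fT TE nz by auto
    then show ?thesis by simp
  qed
  have apos: "a k > 0" if "T \<in> ST" "card (T \<inter> Ng) = k" for T k
    unfolding aeq
    by (rule sum_pos2[of _ T]) (use fST that twpos in auto)
  have poly: "tree_sum {1..N} E (weight_t \<gamma> t) = (\<Sum>k = cp - 1 .. N - cn. a k * (- t) ^ k)" for t
  proof -
    have "tree_sum {1..N} E (weight_t \<gamma> t) = (\<Sum>T\<in>ST. (- t) ^ card (T \<inter> Ng) * \<bar>tree_weight \<gamma> T\<bar>)"
      unfolding tree_sum_def ST_def V_def Ng_def
    proof (rule sum.cong[OF refl])
      fix T assume "T \<in> spanning_trees {1..N} E"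
      then have "T \<in> ST" using ST_def V_def by simp
      then have "finite T" "T \<subseteq> E" using tree_facts(1)[OF fV fE ok] st_eq ST_def by auto
      then show "(\<Prod>e\<in>T. weight_t \<gamma> t e) = (- t) ^ card (T \<inter> neg_edges E \<gamma>) * \<bar>tree_weight \<gamma> T\<bar>"
        using tree_prod nz by blast
    qed
    also have "\<dots> = (\<Sum>k = cp - 1 .. N - cn. \<Sum>T\<in>{T. T \<in> ST \<and> card (T \<inter> Ng) = k}. (- t) ^ card (T \<inter> Ng) * \<bar>tree_weight \<gamma> T\<bar>)"
      by (rule sum.group[symmetric]) (use fST range in auto)
    also have "\<dots> = (\<Sum>k = cp - 1 .. N - cn. a k * (- t) ^ k)"
    proof (rule sum.cong[OF refl])
      fix k
      have "(\<Sum>T\<in>{T. T \<in> ST \<and> card (T \<inter> Ng) = k}. (- t) ^ card (T \<inter> Ng) * \<bar>tree_weight \<gamma> T\<bar>)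
          = (\<Sum>T\<in>{T. T \<in> ST \<and> card (T \<inter> Ng) = k}. (- t) ^ k * \<bar>tree_weight \<gamma> T\<bar>)"
        by (rule sum.cong) auto
      also have "\<dots> = a k * (- t) ^ k" unfolding aeq by (simp add: sum_distrib_left mult.commute)
      finally show "(\<Sum>T\<in>{T. T \<in> ST \<and> card (T \<inter> Ng) = k}. (- t) ^ card (T \<inter> Ng) * \<bar>tree_weight \<gamma> T\<bar>) = a k * (- t) ^ k" .
    qed
    finally show ?thesis .
  qed
  have nonneg: "\<forall>k. a k \<ge> 0" unfolding a_def by (auto intro: sum_nonneg)
  show ?thesis
    using poly nonneg apos[OF T1(1) k1] apos[OF T2(1) k2]
    unfolding cp_def cn_def Ps_def Ng_def V_def by simp
qed

end
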